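(* Let $\mathbb{F}_q$ be a finite field, $G_4=UU_4(\mathbb{F}_q)$ the group of $4\times 4$ upper triangular unipotent matrices over $\mathbb{F}_q$, and $N_2=\{A=(a_{ij})\in G_4: a_{23}=0,\ a_{12}a_{34}\ne 0\}$. Define an equivalence relation $R$ on $N_2$ by $yRz$ iff $C_{G_4}(y)=C_{G_4}(z)$. Then the set \[X_{N_2}=\{A=(a_{ij})\in G_4: a_{12}=1,\ a_{13}=x_{13},\ a_{14}=0,\ a_{23}=0,\ a_{24}=x_{24},\ a_{34}=x_{34},\ x_{34}\in\mathbb{F}_q^*,\ x_{13},x_{24}\in\mathbb{F}_q\}\] contains exactly one element of each $R$-equivalence class of $N_2$, and $|X_{N_2}|=q^2(q-1)$.
   Context: $C_{G_4}(y)$ denotes the centralizer of $y$ in $G_4$. *)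

theory Defs
  imports Main
begin

text \<open>4x4 matrices over a ring are represented as functions nat => nat => 'a,
  with indices ranging over 1..4 and all entries outside that range equal to 0.\<close>

definition mmul4 :: "(nat \<Rightarrow> nat \<Rightarrow> 'a::comm_ring_1) \<Rightarrow> (nat \<Rightarrow> nat \<Rightarrow> 'a) \<Rightarrow> (nat \<Rightarrow> nat \<Rightarrow> 'a)" where
  "mmul4 A B = (\<lambda>i j. if i \<in> {1..4} \<and> j \<in> {1..4} then (\<Sum>k = 1..4. A i k * B k j) else 0)"

definition UU4 :: "(nat \<Rightarrow> nat \<Rightarrow> 'a::comm_ring_1) set" where
  "UU4 = {A. \<forall>i j. (i \<notin> {1..4} \<or> j \<notin> {1..4} \<longrightarrow> A i j = 0)
                 \<and> (i \<in> {1..4} \<and> i = j \<longrightarrow> A i j = 1)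
                 \<and> (i \<in> {1..4} \<and> j \<in> {1..4} \<and> j < i \<longrightarrow> A i j = 0)}"

definition cent4 :: "(nat \<Rightarrow> nat \<Rightarrow> 'a::comm_ring_1) \<Rightarrow> (nat \<Rightarrow> nat \<Rightarrow> 'a) set" where
  "cent4 y = {g \<in> UU4. mmul4 g y = mmul4 y g}"

definition N2 :: "(nat \<Rightarrow> nat \<Rightarrow> 'a::comm_ring_1) set" where
  "N2 = {A \<in> UU4. A 2 3 = 0 \<and> A 1 2 * A 3 4 \<noteq> 0}"

definition relR :: "(nat \<Rightarrow> nat \<Rightarrow> 'a::comm_ring_1) \<Rightarrow> (nat \<Rightarrow> nat \<Rightarrow> 'a) \<Rightarrow> bool" where
  "relR y z \<longleftrightarrow> cent4 y = cent4 z"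

definition XN2 :: "(nat \<Rightarrow> nat \<Rightarrow> 'a::comm_ring_1) set" where
  "XN2 = {A \<in> UU4. A 1 2 = 1 \<and> A 1 4 = 0 \<and> A 2 3 = 0 \<and> A 3 4 \<noteq> 0}"

end

theory Submission
  imports Defs
begin

definition mk4 :: "'a::comm_ring_1 \<Rightarrow> 'a \<Rightarrow> 'a \<Rightarrow> 'a \<Rightarrow> 'a \<Rightarrow> 'a \<Rightarrow> nat \<Rightarrow> nat \<Rightarrow> 'a" where
  "mk4 p q r s t u = (\<lambda>i j. if i \<in> {1..4} \<and> j \<in> {1..4} then
     (if i = j then 1 else if i = 1 \<and> j = 2 then p else if i = 1 \<and> j = 3 then q
      else if i = 1 \<and> j = 4 then r else if i = 2 \<and> j = 3 then s else if i = 2 \<and> j = 4 then t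
      else if i = 3 \<and> j = 4 then u else 0) else 0)"

lemma mk4_UU4: "mk4 p q r s t u \<in> UU4"
  unfolding UU4_def mk4_def by auto

lemma mk4_entries: "mk4 p q r s t u 1 2 = p" "mk4 p q r s t u 1 3 = q" "mk4 p q r s t u 1 4 = r"
  "mk4 p q r s t u 2 3 = s" "mk4 p q r s t u 2 4 = t" "mk4 p q r s t u 3 4 = u"
  unfolding mk4_def by auto

lemma mk4_entries1[simp]: "mk4 p q r s t u (Suc 0) 2 = p" "mk4 p q r s t u (Suc 0) 3 = q" "mk4 p q r s t u (Suc 0) 4 = r"
  using mk4_entries by simp_all

declare mk4_entries[simp]

lemma four_cases: "(i::nat) \<in> {1..4} \<longleftrightarrow> i = 1 \<or> i = 2 \<or> i = 3 \<or> i = 4"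
  by auto

lemma UU4_eq: assumes "A \<in> UU4"
  shows "A = mk4 (A 1 2) (A 1 3) (A 1 4) (A 2 3) (A 2 4) (A 3 4)"
proof (rule ext, rule ext)
  fix i j
  show "A i j = mk4 (A 1 2) (A 1 3) (A 1 4) (A 2 3) (A 2 4) (A 3 4) i j"
  proof (cases "i \<in> {1..4} \<and> j \<in> {1..4}")
    case True
    then have i: "i = 1 \<or> i = 2 \<or> i = 3 \<or> i = 4" and j: "j = 1 \<or> j = 2 \<or> j = 3 \<or> j = 4"
      by auto
    have d: "\<And>k. k \<in> {1..4} \<Longrightarrow> A k k = 1" using assms unfolding UU4_def by blast
    have l: "\<And>i j. i \<in> {1..4} \<Longrightarrow> j \<in> {1..4} \<Longrightarrow> j < i \<Longrightarrow> A i j = 0"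
      using assms unfolding UU4_def by blast
    show ?thesis using i j by (elim disjE) (simp_all add: mk4_def d l)
  next
    case False
    with assms show ?thesis unfolding UU4_def mk4_def by auto
  qed
qed

lemma sum14: "(\<Sum>k = 1..4::nat. f k) = f 1 + f 2 + f 3 + (f 4::'a::comm_ring_1)"
  by (simp add: numeral_eq_Suc)

lemma mk4_mul: "mmul4 (mk4 p q r s t u) (mk4 p' q' r' s' t' u') =
   mk4 (p+p') (q + p*s' + q') (r + p*t' + q*u' + r') (s+s') (t + s*u' + t') (u+u')"
proof (rule ext, rule ext)
  fix i j :: nat
  show "mmul4 (mk4 p q r s t u) (mk4 p' q' r' s' t' u') i j =
   mk4 (p+p') (q + p*s' + q') (r + p*t' + q*u' + r') (s+s') (t + s*u' + t') (u+u') i j"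
  proof (cases "i \<in> {1..4} \<and> j \<in> {1..4}")
    case True
    then have i: "i = 1 \<or> i = 2 \<or> i = 3 \<or> i = 4" and j: "j = 1 \<or> j = 2 \<or> j = 3 \<or> j = 4"
      by auto
    show ?thesis unfolding mmul4_def sum14 using i j
      by (elim disjE) (simp_all add: mk4_def algebra_simps)
  next
    case False
    then show ?thesis unfolding mmul4_def mk4_def by auto
  qed
qed

lemma mk4_inj: "mk4 p q r s t u = mk4 p' q' r' s' t' u' \<longleftrightarrow>
   p = p' \<and> q = q' \<and> r = r' \<and> s = s' \<and> t = t' \<and> u = u'"
  by (metis mk4_entries)

lemma comm_iff:
  fixes A B :: "nat \<Rightarrow> nat \<Rightarrow> 'a::comm_ring_1"
  assumes "A \<in> UU4" "B \<in> UU4"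
  shows "mmul4 A B = mmul4 B A \<longleftrightarrow> A 1 2 * B 2 3 = B 1 2 * A 2 3 \<and> A 2 3 * B 3 4 = B 2 3 * A 3 4
      \<and> A 1 2 * B 2 4 + A 1 3 * B 3 4 = B 1 2 * A 2 4 + B 1 3 * A 3 4"
  apply (subst (1 2) UU4_eq[OF assms(1)])
  apply (subst (1 2) UU4_eq[OF assms(2)])
  apply (simp only: mk4_mul mk4_inj)
  apply (simp add: algebra_simps)
  apply blast
  done

lemma cent_char:
  fixes y :: "nat \<Rightarrow> nat \<Rightarrow> 'a::field"
  assumes "y \<in> N2"
  shows "g \<in> cent4 y \<longleftrightarrow> g \<in> UU4 \<and> g 2 3 = 0 \<and>
     g 1 2 * y 2 4 + g 1 3 * y 3 4 = y 1 2 * g 2 4 + y 1 3 * g 3 4"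
proof -
  have y: "y \<in> UU4" "y 2 3 = 0" "y 1 2 \<noteq> 0" using assms unfolding N2_def by auto
  show ?thesis
  proof
    assume "g \<in> cent4 y"
    then have g: "g \<in> UU4" "mmul4 g y = mmul4 y g" unfolding cent4_def by auto
    from comm_iff[OF g(1) y(1)] g(2) y show "g \<in> UU4 \<and> g 2 3 = 0 \<and>
     g 1 2 * y 2 4 + g 1 3 * y 3 4 = y 1 2 * g 2 4 + y 1 3 * g 3 4" using g(1) by auto
  next
    assume "g \<in> UU4 \<and> g 2 3 = 0 \<and>
     g 1 2 * y 2 4 + g 1 3 * y 3 4 = y 1 2 * g 2 4 + y 1 3 * g 3 4"
    then show "g \<in> cent4 y" using comm_iff[of g y] y unfolding cent4_def by auto
  qed
qed

lemma scale_eq: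
  fixes a :: "'a::field"
  assumes "a \<noteq> 0"
  shows "(g12 * d + g13 * e = a * g24 + b * g34) \<longleftrightarrow>
         (g12 * (d/a) + g13 * (e/a) = 1 * g24 + (b/a) * g34)"
proof -
  have "(g12 * d + g13 * e = a * g24 + b * g34) \<longleftrightarrow>
        ((g12 * d + g13 * e)/a = (a * g24 + b * g34)/a)"
    using assms by (metis nonzero_divide_eq_eq nonzero_mult_div_cancel_left times_divide_eq_right)
  also have "\<dots> \<longleftrightarrow> (g12 * (d/a) + g13 * (e/a) = 1 * g24 + (b/a) * g34)"
    using assms by (simp add: add_divide_distrib)
  finally show ?thesis .
qed

lemma XN2_N2: "XN2 \<subseteq> (N2 :: (nat \<Rightarrow> nat \<Rightarrow> 'a::field) set)"
  unfolding XN2_def N2_def by auto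

lemma exists_rep:
  fixes y :: "nat \<Rightarrow> nat \<Rightarrow> 'a::field"
  assumes yN: "y \<in> N2"
  shows "\<exists>!x. x \<in> XN2 \<and> relR y x"
proof -
  define a b d e where "a = y 1 2" "b = y 1 3" "d = y 2 4" "e = y 3 4"
  have a0: "a \<noteq> 0" and e0: "e \<noteq> 0" using yN unfolding N2_def a_b_d_e_def by auto
  define x0 where "x0 = mk4 1 (b/a) 0 0 (d/a) (e/a)"
  have x0X: "x0 \<in> XN2" unfolding x0_def XN2_def using mk4_UU4 mk4_entries a0 e0 by auto
  then have x0N: "x0 \<in> N2" using XN2_N2 by auto
  have "cent4 y = cent4 x0"
  proof (rule set_eqI)
    fix g
    show "g \<in> cent4 y \<longleftrightarrow> g \<in> cent4 x0"
      unfolding cent_char[OF yN] cent_char[OF x0N]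
      using scale_eq[OF a0, of "g 1 2" d "g 1 3" e "g 2 4" b "g 3 4"]
      unfolding x0_def mk4_entries a_b_d_e_def by auto
  qed
  then have r0: "relR y x0" unfolding relR_def .
  show ?thesis
  proof (rule ex1I[of _ x0])
    show "x0 \<in> XN2 \<and> relR y x0" using x0X r0 by auto
  next
    fix x assume xx: "x \<in> XN2 \<and> relR y x"
    then have xX: "x \<in> XN2" and cx: "cent4 y = cent4 x" unfolding relR_def by auto
    have xN: "x \<in> N2" using xX XN2_N2 by auto
    have xU: "x \<in> UU4" and x12: "x 1 2 = 1" and x14: "x 1 4 = 0" and x23: "x 2 3 = 0"
      using xX unfolding XN2_def by auto
    have m: "g \<in> cent4 y \<Longrightarrow> g 1 2 * x 2 4 + g 1 3 * x 3 4 = g 2 4 + x 1 3 * g 3 4" for g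
      using cent_char[OF xN, of g] cx x12 by auto
    have g1: "mk4 a 0 0 0 d 0 \<in> cent4 y"
      unfolding cent_char[OF yN] using mk4_UU4 by (simp add: mk4_entries a_b_d_e_def)
    have g2: "mk4 0 a 0 0 e 0 \<in> cent4 y"
      unfolding cent_char[OF yN] using mk4_UU4 by (simp add: mk4_entries a_b_d_e_def mult.commute)
    have g3: "mk4 0 0 0 0 b (-a) \<in> cent4 y"
      unfolding cent_char[OF yN] using mk4_UU4 by (simp add: mk4_entries a_b_d_e_def mult.commute)
    have "a * x 2 4 = d" using m[OF g1] by (simp add: mk4_entries)
    then have x24: "x 2 4 = d/a" using a0 by (simp add: field_simps)
    have "a * x 3 4 = e" using m[OF g2] by (simp add: mk4_entries)
    then have x34: "x 3 4 = e/a" using a0 by (simp add: field_simps)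
    have "0 = b - x 1 3 * a" using m[OF g3] by (simp add: mk4_entries)
    then have x13: "x 1 3 = b/a" using a0 by (simp add: field_simps)
    show "x = x0" using UU4_eq[OF xU] unfolding x0_def x12 x13 x14 x23 x24 x34 .
  qed
qed

lemma card_XN2: "card (XN2 :: (nat \<Rightarrow> nat \<Rightarrow> 'a::{field,finite}) set)
   = card (UNIV :: 'a set)^2 * (card (UNIV :: 'a set) - 1)"
proof -
  define f where "f = (\<lambda>(q::'a, t::'a, u::'a). mk4 1 q 0 0 t u)"
  have img: "XN2 = f ` (UNIV \<times> UNIV \<times> (UNIV - {0}))"
  proof (rule set_eqI)
    fix x :: "nat \<Rightarrow> nat \<Rightarrow> 'a"
    show "x \<in> XN2 \<longleftrightarrow> x \<in> f ` (UNIV \<times> UNIV \<times> (UNIV - {0}))"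
    proof
      assume "x \<in> XN2"
      then have xU: "x \<in> UU4" and h: "x 1 2 = 1" "x 1 4 = 0" "x 2 3 = 0" "x 3 4 \<noteq> 0"
        unfolding XN2_def by auto
      have "x = f (x 1 3, x 2 4, x 3 4)" using UU4_eq[OF xU] h unfolding f_def by simp
      then show "x \<in> f ` (UNIV \<times> UNIV \<times> (UNIV - {0}))" using h by blast
    next
      assume "x \<in> f ` (UNIV \<times> UNIV \<times> (UNIV - {0}))"
      then show "x \<in> XN2" unfolding f_def XN2_def using mk4_UU4 by (auto simp: mk4_entries)
    qed
  qed
  have inj: "inj f" unfolding inj_def f_def by (auto simp: mk4_inj)
  have "card (XN2 :: (nat \<Rightarrow> nat \<Rightarrow> 'a) set) = card ((UNIV::'a set) \<times> (UNIV::'a set) \<times> (UNIV - {0::'a}))"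
  proof -
    have "inj_on f (UNIV \<times> UNIV \<times> (UNIV - {0}))" using inj by (metis inj_on_subset subset_UNIV)
    then show ?thesis unfolding img by (simp add: card_image)
  qed
  also have "\<dots> = card (UNIV :: 'a set) * (card (UNIV :: 'a set) * (card (UNIV :: 'a set) - 1))"
    by (simp add: card_cartesian_product card_Diff_singleton)
  finally show ?thesis by (simp add: power2_eq_square)
qed

theorem lemma4p7:
  shows "(XN2 :: (nat \<Rightarrow> nat \<Rightarrow> 'a::{field,finite}) set) \<subseteq> N2
    \<and> (\<forall>y \<in> (N2 :: (nat \<Rightarrow> nat \<Rightarrow> 'a) set). \<exists>!x. x \<in> XN2 \<and> relR y x)
    \<and> card (XN2 :: (nat \<Rightarrow> nat \<Rightarrow> 'a) set) = card (UNIV :: 'a set)^2 * (card (UNIV :: 'a set) - 1)"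
  using XN2_N2 exists_rep card_XN2 by blast

end
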